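(* Let $\kappa$ be a cardinal and let $\{X_\alpha\}_{\alpha\in\mathbb I}$ be a $\kappa$-long directed family of topological spaces, with union $X=\bigcup_{\alpha}X_\alpha$. For an admissible topology $\mathscr S$ on $X$, the following are equivalent: (i) $t(X,\mathscr S)\leq\kappa$; (ii) $\mathscr S=\mathscr T$, where $\mathscr T$ is the colimit space topology, and $t(X_\alpha,\mathscr S)\leq\kappa$ for all $\alpha\in\mathbb I$.
   Context: A directed family of spaces $\{X_\alpha\}_{\alpha\in\mathbb I}$ here consists of spaces with $X_\alpha\subseteq X_\beta$ for $\alpha\leq\beta$, the bonding maps being the inclusions (continuous). It is $\kappa$-long if every subset $C\subseteq\mathbb I$ with $|C|\leq\kappa$ has an upper bound in $\mathbb I$. The colimit space topology on $X$ is $\mathscr T=\{U\subseteq X\mid U\cap X_\alpha\text{ open in }X_\alpha\ \forall\alpha\}$. A topology $\mathscr S$ on $X$ is admissible if every inclusion $X_\alpha\to(X,\mathscr S)$ is a topological embedding. The tightness $t(Y)$ of a space $Y$ is the least cardinal $\lambda$ such that whenever $p\in\operatorname{cl}A$ for $A\subseteq Y$, there is $C\subseteq A$ with $|C|\leq\lambda$ and $p\in\operatorname{cl}C$. $t(X_\alpha,\mathscr S)$ denotes the tightness of $X_\alpha$ with the subspace topology from $\mathscr S$. *)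

theory Defs
  imports "HOL-Analysis.Analysis"
begin

text \<open>Cardinal comparison: the cardinal kappa is represented as the cardinality of a set K.\<close>
definition card_le :: "'a set \<Rightarrow> 'k set \<Rightarrow> bool" where
  "card_le C K \<longleftrightarrow> (card_of C, card_of K) \<in> ordLeq"

definition tightness_le :: "'a topology \<Rightarrow> 'k set \<Rightarrow> bool" where
  "tightness_le Y K \<longleftrightarrow>
     (\<forall>A p. A \<subseteq> topspace Y \<and> p \<in> Y closure_of A \<longrightarrow>
        (\<exists>C. C \<subseteq> A \<and> card_le C K \<and> p \<in> Y closure_of C))"

definition directed_family ::
  "'i set \<Rightarrow> ('i \<Rightarrow> 'i \<Rightarrow> bool) \<Rightarrow> ('i \<Rightarrow> 'a topology) \<Rightarrow> bool" where
  "directed_family I le X \<longleftrightarrow>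
     (\<forall>a\<in>I. le a a) \<and>
     (\<forall>a\<in>I. \<forall>b\<in>I. \<forall>c\<in>I. le a b \<and> le b c \<longrightarrow> le a c) \<and>
     (\<forall>a\<in>I. \<forall>b\<in>I. \<exists>c\<in>I. le a c \<and> le b c) \<and>
     (\<forall>a\<in>I. \<forall>b\<in>I. le a b \<longrightarrow>
        topspace (X a) \<subseteq> topspace (X b) \<and> continuous_map (X a) (X b) id)"

definition kappa_long ::
  "'k set \<Rightarrow> 'i set \<Rightarrow> ('i \<Rightarrow> 'i \<Rightarrow> bool) \<Rightarrow> bool" where
  "kappa_long K I le \<longleftrightarrow>
     (\<forall>C. C \<subseteq> I \<and> card_le C K \<longrightarrow> (\<exists>b\<in>I. \<forall>c\<in>C. le c b))"

definition union_space :: "'i set \<Rightarrow> ('i \<Rightarrow> 'a topology) \<Rightarrow> 'a set" where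
  "union_space I X = (\<Union>a\<in>I. topspace (X a))"

definition colimit_topology :: "'i set \<Rightarrow> ('i \<Rightarrow> 'a topology) \<Rightarrow> 'a topology" where
  "colimit_topology I X = topology (\<lambda>U. U \<subseteq> union_space I X \<and>
     (\<forall>a\<in>I. openin (X a) (U \<inter> topspace (X a))))"

definition admissible :: "'i set \<Rightarrow> ('i \<Rightarrow> 'a topology) \<Rightarrow> 'a topology \<Rightarrow> bool" where
  "admissible I X S \<longleftrightarrow> topspace S = union_space I X \<and>
     (\<forall>a\<in>I. embedding_map (X a) S id)"

end

theory Submission
  imports Defs
begin

lemma colim_istop:
  "istopology (\<lambda>U. U \<subseteq> union_space I X \<and> (\<forall>a\<in>I. openin (X a) (U \<inter> topspace (X a))))"
  unfolding istopology_def
proof (rule conjI; intro allI impI)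
  fix U V
  assume U: "U \<subseteq> union_space I X \<and> (\<forall>a\<in>I. openin (X a) (U \<inter> topspace (X a)))"
    and V: "V \<subseteq> union_space I X \<and> (\<forall>a\<in>I. openin (X a) (V \<inter> topspace (X a)))"
  have "\<forall>a\<in>I. openin (X a) (U \<inter> V \<inter> topspace (X a))"
  proof
    fix a assume "a \<in> I"
    then have "openin (X a) ((U \<inter> topspace (X a)) \<inter> (V \<inter> topspace (X a)))"
      using U V by blast
    then show "openin (X a) (U \<inter> V \<inter> topspace (X a))"
      by (simp add: Int_ac)
  qed
  then show "U \<inter> V \<subseteq> union_space I X \<and> (\<forall>a\<in>I. openin (X a) (U \<inter> V \<inter> topspace (X a)))"
    using U by blast
next
  fix K
  assume K: "\<forall>U\<in>K. U \<subseteq> union_space I X \<and> (\<forall>a\<in>I. openin (X a) (U \<inter> topspace (X a)))"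
  have "\<forall>a\<in>I. openin (X a) (\<Union>K \<inter> topspace (X a))"
  proof
    fix a assume "a \<in> I"
    then have "openin (X a) (\<Union>((\<lambda>U. U \<inter> topspace (X a)) ` K))"
      using K by (intro openin_Union) auto
    moreover have "\<Union>((\<lambda>U. U \<inter> topspace (X a)) ` K) = \<Union>K \<inter> topspace (X a)" by blast
    ultimately show "openin (X a) (\<Union>K \<inter> topspace (X a))" by simp
  qed
  then show "\<Union>K \<subseteq> union_space I X \<and> (\<forall>a\<in>I. openin (X a) (\<Union>K \<inter> topspace (X a)))"
    using K by blast
qed

lemma openin_colim:
  "openin (colimit_topology I X) U \<longleftrightarrow>
    U \<subseteq> union_space I X \<and> (\<forall>a\<in>I. openin (X a) (U \<inter> topspace (X a)))"
  unfolding colimit_topology_def using topology_inverse'[OF colim_istop[of I X]] by simp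

lemma closure_finite_points:
  assumes "finite D"
  shows "Y closure_of D = (\<Union>d\<in>D. Y closure_of {d})"
proof -
  have "D = \<Union>((\<lambda>d. {d}) ` D)" by blast
  then have "Y closure_of D = Y closure_of \<Union>((\<lambda>d. {d}) ` D)" by simp
  also have "\<dots> = (\<Union>d\<in>D. Y closure_of {d})"
    using assms by (subst closure_of_Union) auto
  finally show ?thesis .
qed

theorem proposition2p3:
  fixes K :: "'k set" and I :: "'i set" and le :: "'i \<Rightarrow> 'i \<Rightarrow> bool"
    and X :: "'i \<Rightarrow> 'a topology" and S :: "'a topology"
  assumes "directed_family I le X"
    and "kappa_long K I le"
    and "admissible I X S"
  shows "tightness_le S K \<longleftrightarrow>
           (S = colimit_topology I X \<and>
            (\<forall>a\<in>I. tightness_le (subtopology S (topspace (X a))) K))"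
proof -
  have DF: "\<forall>a\<in>I. \<forall>b\<in>I. \<exists>c\<in>I. le a c \<and> le b c"
    and DS: "\<forall>a\<in>I. \<forall>b\<in>I. le a b \<longrightarrow> topspace (X a) \<subseteq> topspace (X b)"
    using assms(1) unfolding directed_family_def by blast+
  have KL: "\<And>C. C \<subseteq> I \<Longrightarrow> card_le C K \<Longrightarrow> \<exists>b\<in>I. \<forall>c\<in>C. le c b"
    using assms(2) unfolding kappa_long_def by blast
  have TS: "topspace S = union_space I X"
    using assms(3) unfolding admissible_def by blast
  have XS: "\<And>a. a \<in> I \<Longrightarrow> X a = subtopology S (topspace (X a))"
    using assms(3) unfolding admissible_def embedding_map_def by auto
  have sub: "\<And>a. a \<in> I \<Longrightarrow> topspace (X a) \<subseteq> topspace S"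
    using TS unfolding union_space_def by blast
  have subopen: "\<And>U. openin S U \<Longrightarrow> openin (colimit_topology I X) U"
  proof -
    fix U assume U: "openin S U"
    have "\<forall>a\<in>I. openin (X a) (U \<inter> topspace (X a))"
    proof
      fix a assume a: "a \<in> I"
      have "openin (subtopology S (topspace (X a))) (U \<inter> topspace (X a))"
        using U by (auto simp: openin_subtopology)
      then show "openin (X a) (U \<inter> topspace (X a))" using XS[OF a] by simp
    qed
    then show "openin (colimit_topology I X) U"
      unfolding openin_colim using U openin_subset TS by blast
  qed
  have hered: "tightness_le (subtopology S (topspace (X a))) K"
    if T: "tightness_le S K" and a: "a \<in> I" for a
    unfolding tightness_le_def
  proof (intro allI impI)
    fix A p
    assume Ap: "A \<subseteq> topspace (subtopology S (topspace (X a))) \<and>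
        p \<in> subtopology S (topspace (X a)) closure_of A"
    then have A: "A \<subseteq> topspace (X a)" and AS: "A \<subseteq> topspace S" by auto
    have pX: "p \<in> topspace (X a)" and pS: "p \<in> S closure_of A"
      using Ap A by (auto simp: closure_of_subtopology Int_absorb1)
    obtain C where C: "C \<subseteq> A" "card_le C K" "p \<in> S closure_of C"
      using T AS pS unfolding tightness_le_def by blast
    have "p \<in> subtopology S (topspace (X a)) closure_of C"
      using C A pX by (simp add: closure_of_subtopology Int_absorb1[of C])
    then show "\<exists>C. C \<subseteq> A \<and> card_le C K \<and> p \<in> subtopology S (topspace (X a)) closure_of C"
      using C by blast
  qed
  show ?thesis
  proof
    assume T: "tightness_le S K"
    have "S = colimit_topology I X"
    proof (rule topology_eq[THEN iffD2], intro allI iffI)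
      fix U assume "openin S U" then show "openin (colimit_topology I X) U" by (rule subopen)
    next
      fix U assume U: "openin (colimit_topology I X) U"
      then have UX: "U \<subseteq> topspace S" and UO: "\<forall>a\<in>I. openin (X a) (U \<inter> topspace (X a))"
        unfolding openin_colim TS by auto
      define F where "F = topspace S - U"
      have "S closure_of F \<subseteq> F"
      proof
        fix p assume p: "p \<in> S closure_of F"
        then have pS: "p \<in> topspace S" using closure_of_subset_topspace[of S F] by blast
        obtain C where C: "C \<subseteq> F" "card_le C K" "p \<in> S closure_of C"
          using T p unfolding tightness_le_def F_def by blast
        have "\<forall>c\<in>C. \<exists>a\<in>I. c \<in> topspace (X a)"
          using C(1) TS unfolding F_def union_space_def by blast
        then obtain f where f: "\<And>c. c \<in> C \<Longrightarrow> f c \<in> I \<and> c \<in> topspace (X (f c))"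
          by metis
        have "card_le (f ` C) K"
          using C(2) card_of_image[of f C] ordLeq_transitive unfolding card_le_def by blast
        then obtain b where b: "b \<in> I" "\<forall>c\<in>f ` C. le c b"
          using KL f by blast
        obtain a0 where a0: "a0 \<in> I" "p \<in> topspace (X a0)"
          using pS TS unfolding union_space_def by blast
        obtain g where g: "g \<in> I" "le b g" "le a0 g" using DF b(1) a0(1) by blast
        have CX: "C \<subseteq> topspace (X g)"
        proof
          fix c assume c: "c \<in> C"
          have "le (f c) b" using b c by blast
          then have "topspace (X (f c)) \<subseteq> topspace (X b)" using DS f[OF c] b(1) by blast
          moreover have "topspace (X b) \<subseteq> topspace (X g)" using DS g b(1) by blast
          ultimately show "c \<in> topspace (X g)" using f[OF c] by blast
        qed
        have pg: "p \<in> topspace (X g)" using DS g a0 by blast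
        show "p \<in> F"
        proof (rule ccontr)
          assume "p \<notin> F"
          then have pU: "p \<in> U" using pS F_def by blast
          have "openin (subtopology S (topspace (X g))) (U \<inter> topspace (X g))"
            using UO g(1) XS[OF g(1)] by metis
          then obtain V where V: "openin S V" "U \<inter> topspace (X g) = V \<inter> topspace (X g)"
            by (auto simp: openin_subtopology)
          have "p \<in> V" using V(2) pU pg by blast
          then obtain y where y: "y \<in> C" "y \<in> V" using C(3) V(1) unfolding in_closure_of by blast
          then have "y \<in> U" using V(2) CX by blast
          then show False using y C(1) F_def by blast
        qed
      qed
      then have "closedin S F" using closure_of_subset_eq F_def by blast
      then have "openin S (topspace S - F)" by blast
      moreover have "topspace S - F = U" using UX F_def by blast
      ultimately show "openin S U" by simp
    qed
    then show "S = colimit_topology I X \<and> (\<forall>a\<in>I. tightness_le (subtopology S (topspace (X a))) K)"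
      using hered T by blast
  next
    assume R: "S = colimit_topology I X \<and> (\<forall>a\<in>I. tightness_le (subtopology S (topspace (X a))) K)"
    then have SC: "S = colimit_topology I X"
      and TX: "\<And>a. a \<in> I \<Longrightarrow> tightness_le (subtopology S (topspace (X a))) K" by auto
    show "tightness_le S K"
      unfolding tightness_le_def
    proof (intro allI impI)
      fix A p assume Ap: "A \<subseteq> topspace S \<and> p \<in> S closure_of A"
      define B where "B = {q. \<exists>C. C \<subseteq> A \<and> card_le C K \<and> q \<in> S closure_of C}"
      have BS: "B \<subseteq> topspace S" unfolding B_def using closure_of_subset_topspace[of S] by blast
      have AB: "A \<subseteq> B"
      proof
        fix x assume x: "x \<in> A"
        then obtain a where a: "a \<in> I" "x \<in> topspace (X a)"
          using Ap TS unfolding union_space_def by blast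
        have "x \<in> subtopology S (topspace (X a)) closure_of {x}"
          using a Ap x by (intro closure_of_subset[THEN subsetD]) auto
        then obtain C where C: "C \<subseteq> {x}" "card_le C K"
            "x \<in> subtopology S (topspace (X a)) closure_of C"
        proof -
          have "{x} \<subseteq> topspace (subtopology S (topspace (X a)))" using a Ap x by auto
          then show ?thesis using that TX[OF a(1)] \<open>x \<in> subtopology S (topspace (X a)) closure_of {x}\<close>
            unfolding tightness_le_def by blast
        qed
        have "x \<in> S closure_of C" using C(3) closure_of_mono[of "topspace (X a) \<inter> C" C S] by (auto simp: closure_of_subtopology)
        then show "x \<in> B" unfolding B_def using C x by blast
      qed
      have closedB: "closedin S B"
      proof -
        have "openin S (topspace S - B)"
        proof -
          have "\<forall>a\<in>I. openin (X a) ((topspace S - B) \<inter> topspace (X a))"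
          proof
            fix a assume a: "a \<in> I"
            let ?Y = "subtopology S (topspace (X a))"
            have "?Y closure_of (B \<inter> topspace (X a)) \<subseteq> B \<inter> topspace (X a)"
            proof
              fix q assume q: "q \<in> ?Y closure_of (B \<inter> topspace (X a))"
              have qX: "q \<in> topspace (X a)" using q by (simp add: closure_of_subtopology)
              obtain D where D: "D \<subseteq> B \<inter> topspace (X a)" "card_le D K" "q \<in> ?Y closure_of D"
              proof -
                have "B \<inter> topspace (X a) \<subseteq> topspace ?Y" using BS by auto
                then show ?thesis using that TX[OF a] q unfolding tightness_le_def by blast
              qed
              have qD: "q \<in> S closure_of D" using D(3) closure_of_mono[of "topspace (X a) \<inter> D" D S] by (auto simp: closure_of_subtopology)
              have "\<forall>d\<in>D. \<exists>C. C \<subseteq> A \<and> card_le C K \<and> d \<in> S closure_of C"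
                using D(1) unfolding B_def by blast
              then obtain h where h: "\<And>d. d \<in> D \<Longrightarrow> h d \<subseteq> A \<and> card_le (h d) K \<and> d \<in> S closure_of (h d)"
                by metis
              have "q \<in> B"
              proof (cases "finite K")
                case True
                then have fD: "finite D" using D(2) card_of_ordLeq_finite unfolding card_le_def by blast
                then obtain d where d: "d \<in> D" "q \<in> S closure_of {d}"
                  using qD closure_finite_points[OF fD, of S] by blast
                have "S closure_of {d} \<subseteq> S closure_of (h d)"
                  using h[OF d(1)] by (intro closure_of_minimal) auto
                then show ?thesis unfolding B_def using h[OF d(1)] d by blast
              next
                case False
                define C where "C = (\<Union>d\<in>D. h d)"
                have "card_le C K" unfolding C_def card_le_def
                  using card_of_UNION_ordLeq_infinite[OF False] D(2) h unfolding card_le_def by blast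
                moreover have "C \<subseteq> A" using h unfolding C_def by blast
                moreover have "S closure_of D \<subseteq> S closure_of C"
                proof (rule closure_of_minimal)
                  show "D \<subseteq> S closure_of C"
                  proof
                    fix d assume d: "d \<in> D"
                    have "h d \<subseteq> C" using d unfolding C_def by blast
                    then show "d \<in> S closure_of C" using h[OF d] closure_of_mono by blast
                  qed
                qed auto
                ultimately show ?thesis unfolding B_def using qD by blast
              qed
              then show "q \<in> B \<inter> topspace (X a)" using qX by blast
            qed
            then have "closedin ?Y (B \<inter> topspace (X a))"
              using closure_of_subset_eq[of "B \<inter> topspace (X a)" ?Y] BS sub[OF a] by auto
            then have "openin ?Y (topspace ?Y - B \<inter> topspace (X a))" by blast
            moreover have "topspace ?Y - B \<inter> topspace (X a) = (topspace S - B) \<inter> topspace (X a)"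
              using sub[OF a] by auto
            ultimately show "openin (X a) ((topspace S - B) \<inter> topspace (X a))"
              using XS[OF a] by metis
          qed
          then have "openin (colimit_topology I X) (topspace S - B)"
            unfolding openin_colim using TS by blast
          then show ?thesis using SC by simp
        qed
        then show ?thesis using BS closedin_def by blast
      qed
      have "S closure_of A \<subseteq> B" using closedB AB by (intro closure_of_minimal)
      then have "p \<in> B" using Ap by blast
      then show "\<exists>C. C \<subseteq> A \<and> card_le C K \<and> p \<in> S closure_of C" unfolding B_def by blast
    qed
  qed
qed

end
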